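(* Let $\alpha>1$. There is a streaming algorithm which, given a weighted word $u$ as a data stream, constructs an $\alpha$-suffix decomposition of $u$ (and, with $t$ letter samplings per suffix, an $(\alpha,t)$-suffix sampling on $u$) of size at most $1+2\lceil\log|u|/\log\alpha\rceil$.
   Context: A weighted word has positive integer weights $|u(i)|$ on its positions, $|u|$ is the total weight. An $\alpha$-suffix decomposition of $u$ of size $s$ is a sequence of suffixes $u^1,\dots,u^s$ with $u^1=u$, $u^s$ the last letter of $u$, each $u^{l+1}$ a strict suffix of $u^l$, and whenever $|u^l|>\alpha|u^{l+1}|$ one has $u^l=a\cdot u^{l+1}$ for a single letter $a$. The letter sampling on $x$ outputs position $i$ with probability $|x(i)|/|x|$; an $(\alpha,t)$-suffix sampling is an $\alpha$-suffix decomposition with $t$ independent letter samplings on each of its suffixes. *)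

theory Defs
  imports "HOL-Probability.Probability_Mass_Function"
begin

text \<open>A weighted word over alphabet 'a is a list of (letter, weight) pairs; positions are
0-indexed. Weights are required to be positive wherever a weighted word is meant.\<close>

definition weight :: "('a \<times> nat) list \<Rightarrow> nat" where
  "weight u = sum_list (map snd u)"

definition suffix_weight :: "('a \<times> nat) list \<Rightarrow> nat \<Rightarrow> nat" where
  "suffix_weight u p = weight (drop p u)"

text \<open>An alpha-suffix decomposition, given by the list of starting positions of the
suffixes u^1, ..., u^s (u^l = drop (ps!l) u).\<close>
definition alpha_suffix_decomp :: "real \<Rightarrow> ('a \<times> nat) list \<Rightarrow> nat list \<Rightarrow> bool" where
  "alpha_suffix_decomp \<alpha> u ps \<longleftrightarrow>
     ps \<noteq> [] \<and> hd ps = 0 \<and> last ps = length u - 1 \<and> sorted_wrt (<) ps \<and>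
     (\<forall>l. Suc l < length ps \<longrightarrow>
        real (suffix_weight u (ps ! l)) > \<alpha> * real (suffix_weight u (ps ! Suc l)) \<longrightarrow>
        ps ! Suc l = ps ! l + 1)"

text \<open>Letter sampling on the suffix starting at p: position i (i >= p) with probability
weight(u(i)) / |suffix|.\<close>
definition letter_sampling :: "('a \<times> nat) list \<Rightarrow> nat \<Rightarrow> nat pmf" where
  "letter_sampling u p = pmf_of_multiset (\<Sum>i\<in>{p..<length u}. replicate_mset (snd (u ! i)) i)"

fun list_pmf :: "'b pmf list \<Rightarrow> 'b list pmf" where
  "list_pmf [] = return_pmf []"
| "list_pmf (p # ps) = bind_pmf p (\<lambda>x. bind_pmf (list_pmf ps) (\<lambda>xs. return_pmf (x # xs)))"

definition suffix_samples :: "nat \<Rightarrow> ('a \<times> nat) list \<Rightarrow> nat list \<Rightarrow> nat list list pmf" where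
  "suffix_samples t u ps = list_pmf (map (\<lambda>p. list_pmf (replicate t (letter_sampling u p))) ps)"

definition stream_run :: "'s \<Rightarrow> ('s \<Rightarrow> 'b \<Rightarrow> 's pmf) \<Rightarrow> 'b list \<Rightarrow> 's pmf" where
  "stream_run init step xs = fold (\<lambda>x M. bind_pmf M (\<lambda>s. step s x)) xs (return_pmf init)"

end

theory Submission
  imports Defs
begin


definition sel :: "bool list \<Rightarrow> 'b list \<Rightarrow> 'b list" where
  "sel m xs = map fst (filter snd (zip xs m))"

function grd :: "real \<Rightarrow> ('b \<Rightarrow> nat) \<Rightarrow> 'b list \<Rightarrow> 'b list" where
  "grd a f [] = []"
| "grd a f [x] = [x]"
| "grd a f (x#y#r) = x # grd a f (drop (length (takeWhile (\<lambda>z. real (f x) \<le> a * real (f z)) (y#r)) - 1) (y#r))"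
  by pat_completeness auto
termination
  by (relation "Wellfounded.measure (\<lambda>(a,f,xs). length xs)") auto

function gmk :: "real \<Rightarrow> ('b \<Rightarrow> nat) \<Rightarrow> 'b list \<Rightarrow> bool list" where
  "gmk a f [] = []"
| "gmk a f [x] = [True]"
| "gmk a f (x#y#r) = True # replicate (length (takeWhile (\<lambda>z. real (f x) \<le> a * real (f z)) (y#r)) - 1) False
     @ gmk a f (drop (length (takeWhile (\<lambda>z. real (f x) \<le> a * real (f z)) (y#r)) - 1) (y#r))"
  by pat_completeness auto
termination
  by (relation "Wellfounded.measure (\<lambda>(a,f,xs). length xs)") auto

lemma sel_Nil[simp]: "sel m [] = []" "sel [] xs = []"
  by (auto simp: sel_def)

lemma sel_Cons[simp]: "sel (b # m) (x # xs) = (if b then x # sel m xs else sel m xs)"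
  by (auto simp: sel_def)

lemma sel_repF: "j \<le> length ys \<Longrightarrow> sel (replicate j False @ m) ys = sel m (drop j ys)"
proof (induction j arbitrary: ys)
  case 0 then show ?case by simp
next
  case (Suc j) then show ?case by (cases ys) auto
qed

lemma length_gmk[simp]: "length (gmk a f xs) = length xs"
proof (induction a f xs rule: gmk.induct)
  case (3 a f x y r)
  let ?k = "length (takeWhile (\<lambda>z. real (f x) \<le> a * real (f z)) (y#r))"
  have "?k \<le> length (y#r)" by (rule length_takeWhile_le)
  then show ?case using 3 by (simp add: Let_def)
qed auto

lemma sel_gmk: "sel (gmk a f xs) xs = grd a f xs"
proof (induction a f xs rule: gmk.induct)
  case (3 a f x y r)
  define k where "k = length (takeWhile (\<lambda>z. real (f x) \<le> a * real (f z)) (y#r))"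
  have "k \<le> length (y#r)" unfolding k_def by (rule length_takeWhile_le)
  then have kl: "k - 1 \<le> length (y#r)" by linarith
  have "sel (gmk a f (x#y#r)) (x#y#r) = x # sel (replicate (k-1) False @ gmk a f (drop (k-1) (y#r))) (y#r)"
    by (simp only: gmk.simps k_def[symmetric] sel_Cons if_True append_Cons)
  also have "\<dots> = x # sel (gmk a f (drop (k-1) (y#r))) (drop (k-1) (y#r))"
    using sel_repF[OF kl] by simp
  also have "\<dots> = x # grd a f (drop (k-1) (y#r))" using 3 unfolding k_def by simp
  also have "\<dots> = grd a f (x#y#r)" by (simp only: grd.simps k_def)
  finally show ?case .
qed auto

lemma gmk_map: "gmk a g (map h xs) = gmk a (g \<circ> h) xs"
proof (induction a "g \<circ> h" xs rule: gmk.induct)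
  case (3 a x y r)
  define k where "k = length (takeWhile (\<lambda>z. real ((g \<circ> h) x) \<le> a * real ((g \<circ> h) z)) (y#r))"
  have tw: "length (takeWhile (\<lambda>z. real (g (h x)) \<le> a * real (g z)) (h y # map h r)) = k"
    unfolding k_def by (simp only: list.map(2)[symmetric] takeWhile_map length_map o_def)
  have "gmk a g (map h (x#y#r)) = True # replicate (k-1) False @ gmk a g (drop (k-1) (map h (y#r)))"
    by (simp only: list.map gmk.simps tw)
  also have "\<dots> = True # replicate (k-1) False @ gmk a (g\<circ>h) (drop (k-1) (y#r))"
    using 3 by (simp only: drop_map k_def)
  also have "\<dots> = gmk a (g \<circ> h) (x#y#r)" by (simp only: gmk.simps k_def)
  finally show ?case .
qed auto

lemma sel_map: "sel m (map h xs) = map h (sel m xs)"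
proof (induction xs arbitrary: m)
  case (Cons x xs) then show ?case by (cases m) auto
qed simp

lemma sel_subset: "set (sel m xs) \<subseteq> set xs"
  by (auto simp: sel_def dest: set_zip_leftD)

definition twk :: "real \<Rightarrow> ('b \<Rightarrow> nat) \<Rightarrow> 'b \<Rightarrow> 'b list \<Rightarrow> nat" where
  "twk a f x ys = length (takeWhile (\<lambda>z. real (f x) \<le> a * real (f z)) ys)"

lemma grd_step: "grd a f (x#y#r) = x # grd a f (drop (twk a f x (y#r) - 1) (y#r))"
  unfolding twk_def by (simp only: grd.simps)

declare grd.simps(3)[simp del]

lemma twk_le: "twk a f x ys \<le> length ys"
  unfolding twk_def by (rule length_takeWhile_le)

lemma D_ne: "drop (twk a f x (y#r) - 1) (y#r) \<noteq> []"
proof -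
  have "twk a f x (y#r) - 1 < length (y#r)" using twk_le[of a f x "y#r"] by simp
  then show ?thesis by simp
qed

lemma grd_Cons_hd: "\<exists>G. grd a f (x#r) = x # G"
proof (cases r)
  case Nil then show ?thesis by simp
next
  case (Cons y r') then show ?thesis by (simp add: grd_step)
qed

lemma grd_nonempty[simp]: "grd a f xs = [] \<longleftrightarrow> xs = []"
  by (metis grd.simps(1) grd_Cons_hd list.distinct(1) neq_Nil_conv)

lemma grd_set: "set (grd a f xs) \<subseteq> set xs"
proof (induction a f xs rule: grd.induct)
  case (3 a f x y r)
  have "set (drop (twk a f x (y#r) - 1) (y#r)) \<subseteq> set (y#r)" by (rule set_drop_subset)
  then show ?case using 3[folded twk_def] grd_step[of a f x y r] by auto
qed auto

lemma grd_set_tl: "set (tl (grd a f xs)) \<subseteq> set (tl xs)"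
proof (induction a f xs rule: grd.induct)
  case (3 a f x y r)
  have "set (drop (twk a f x (y#r) - 1) (y#r)) \<subseteq> set (y#r)" by (rule set_drop_subset)
  then show ?case using grd_set[of a f "drop (twk a f x (y#r) - 1) (y#r)"] grd_step[of a f x y r] by auto
qed auto

lemma grd_last: "xs \<noteq> [] \<Longrightarrow> last (grd a f xs) = last xs"
proof (induction a f xs rule: grd.induct)
  case (3 a f x y r)
  define D where "D = drop (twk a f x (y#r) - 1) (y#r)"
  have ne: "D \<noteq> []" unfolding D_def by (rule D_ne)
  have "last (grd a f (x#y#r)) = last (grd a f D)"
    using ne by (simp add: D_def grd_step)
  also have "\<dots> = last D" using 3[folded twk_def] ne unfolding D_def by blast
  also have "\<dots> = last (x#y#r)" using ne unfolding D_def by (simp add: last_drop)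
  finally show ?case .
qed auto

lemma grd_sorted: "sorted_wrt R xs \<Longrightarrow> sorted_wrt R (grd a f xs)"
proof (induction a f xs rule: grd.induct)
  case (3 a f x y r)
  define D where "D = drop (twk a f x (y#r) - 1) (y#r)"
  have "sorted_wrt R (y#r)" using 3(2) by simp
  then have "sorted_wrt R D" unfolding D_def by (rule sorted_wrt_drop)
  then have s1: "sorted_wrt R (grd a f D)" using 3(1)[folded twk_def] unfolding D_def by blast
  have "set (grd a f D) \<subseteq> set (y#r)" using grd_set[of a f D] set_drop_subset[of _ "y#r"] unfolding D_def by blast
  then have "\<forall>z\<in>set (grd a f D). R x z" using 3(2) by auto
  then show ?case using s1 by (simp add: D_def grd_step)
qed auto

fun gd :: "real \<Rightarrow> (nat \<Rightarrow> nat) \<Rightarrow> nat list \<Rightarrow> bool" where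
  "gd a S (p#q#r) = ((q = Suc p \<or> real (S p) \<le> a * real (S q)) \<and> gd a S (q#r))"
| "gd a S _ = True"

lemma gd_tl: "gd a S (x#xs) \<Longrightarrow> gd a S xs"
  by (cases xs) auto

lemma gd_drop: "gd a S xs \<Longrightarrow> gd a S (drop j xs)"
proof (induction j arbitrary: xs)
  case (Suc j) then show ?case by (cases xs) (auto dest: gd_tl)
qed simp

lemma grd_gd: "gd a f xs \<Longrightarrow> gd a f (grd a f xs)"
proof (induction a f xs rule: grd.induct)
  case (3 a f x y r)
  define P where "P = (\<lambda>z. real (f x) \<le> a * real (f z))"
  define k where "k = twk a f x (y#r)"
  have kP: "k = length (takeWhile P (y#r))" unfolding k_def twk_def P_def ..
  define D where "D = drop (k-1) (y#r)"
  have ne: "D \<noteq> []" unfolding D_def k_def by (rule D_ne)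
  have gD: "gd a f D" unfolding D_def using gd_drop gd_tl 3(2) by blast
  then have g1: "gd a f (grd a f D)" using 3(1)[folded twk_def] unfolding D_def k_def by blast
  obtain G where G: "grd a f D = hd D # G" using grd_Cons_hd[of a f "hd D" "tl D"] ne by auto
  have c: "hd D = Suc x \<or> real (f x) \<le> a * real (f (hd D))"
  proof (cases "k = 0")
    case True then show ?thesis using 3(2) unfolding D_def by simp
  next
    case False
    then have kl: "k - 1 < length (takeWhile P (y#r))" unfolding kP by simp
    then have "(takeWhile P (y#r)) ! (k-1) \<in> set (takeWhile P (y#r))" by (rule nth_mem)
    then have "P ((takeWhile P (y#r)) ! (k-1))" by (rule set_takeWhileD[THEN conjunct2])
    moreover have "(takeWhile P (y#r)) ! (k-1) = (y#r) ! (k-1)"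
      using kl by (rule takeWhile_nth)
    moreover have "k - 1 < length (y#r)" using kl length_takeWhile_le[of P "y#r"] by linarith
    then have "hd D = (y#r) ! (k-1)" unfolding D_def by (simp add: hd_drop_conv_nth)
    ultimately show ?thesis unfolding P_def by simp
  qed
  have "grd a f (x#y#r) = x # grd a f D" unfolding D_def k_def by (rule grd_step)
  then show ?case using G g1 c by simp
qed auto

fun sp :: "real \<Rightarrow> nat list \<Rightarrow> bool" where
  "sp a (x#y#z#r) = (a * real z < real x \<and> sp a (y#z#r))"
| "sp a _ = True"

lemma sp_tl: "sp a (x#xs) \<Longrightarrow> sp a xs"
proof (cases xs)
  case (Cons y ys)
  then show "sp a (x#xs) \<Longrightarrow> sp a xs" by (cases ys) auto
qed simp

lemma dropWhile_fail:
  fixes f :: "'b \<Rightarrow> nat"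
  assumes "sorted_wrt (\<lambda>p q. f q < f p) ys" "\<And>g h. f g \<le> f h \<Longrightarrow> P g \<Longrightarrow> P h"
  shows "\<forall>g\<in>set (dropWhile P ys). \<not> P g"
  using assms(1)
proof (induction ys)
  case (Cons y ys)
  have sys: "sorted_wrt (\<lambda>p q. f q < f p) ys" using Cons(2) by simp
  show ?case
  proof (cases "P y")
    case True
    then have "dropWhile P (y#ys) = dropWhile P ys" by simp
    then show ?thesis using Cons(1)[OF sys] by (simp only:)
  next
    case False
    have "\<not> P g" if "g \<in> set ys" for g
    proof
      assume "P g"
      have "f g < f y" using Cons(2) that by simp
      then have "f g \<le> f y" by (rule less_imp_le)
      then have "P y" using assms(2)[of g y] \<open>P g\<close> by blast
      then show False using False by blast
    qed
    then show ?thesis using False by simp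
  qed
qed simp

lemma grd_sp:
  shows "a \<ge> 0 \<Longrightarrow> sorted_wrt (\<lambda>p q. f q < f p) xs \<Longrightarrow> sp a (map f (grd a f xs))"
proof (induction a f xs rule: grd.induct)
  case (3 a f x y r)
  define P where "P = (\<lambda>z. real (f x) \<le> a * real (f z))"
  define k where "k = twk a f x (y#r)"
  have kP: "k = length (takeWhile P (y#r))" unfolding k_def twk_def P_def ..
  define D where "D = drop (k-1) (y#r)"
  have ne: "D \<noteq> []" unfolding D_def k_def by (rule D_ne)
  have syr: "sorted_wrt (\<lambda>p q. f q < f p) (y#r)" using 3(3) by simp
  then have sD: "sorted_wrt (\<lambda>p q. f q < f p) D" unfolding D_def by (rule sorted_wrt_drop)
  then have s1: "sp a (map f (grd a f D))" using 3(1)[folded twk_def] 3(2) unfolding D_def k_def by blast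
  obtain G where G: "grd a f D = hd D # G" using grd_Cons_hd[of a f "hd D" "tl D"] ne by auto
  have "set G \<subseteq> set (tl D)" using grd_set_tl[of a f D] G by simp
  also have "set (tl D) \<subseteq> set (drop k (y#r))" unfolding D_def
    by (cases k) (auto simp: drop_Suc tl_drop)
  also have "drop k (y#r) = dropWhile P (y#r)" unfolding kP by (simp add: dropWhile_eq_drop)
  finally have sub: "set G \<subseteq> set (dropWhile P (y#r))" .
  have mono: "P h" if A: "f g \<le> f h" "P g" for g h
  proof -
    have "real (f x) \<le> a * real (f g)" using A(2) unfolding P_def by simp
    moreover have "a * real (f g) \<le> a * real (f h)" using A(1) 3(2) by (simp add: mult_left_mono)
    ultimately show "P h" unfolding P_def by linarith
  qed
  have "\<forall>g\<in>set (dropWhile P (y#r)). \<not> P g"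
    by (rule dropWhile_fail[OF syr]) (use mono in blast)
  then have "\<forall>g\<in>set G. \<not> P g" using sub by blast
  then have c: "\<forall>g\<in>set G. a * real (f g) < real (f x)" unfolding P_def by auto
  have "grd a f (x#y#r) = x # grd a f D" unfolding D_def k_def by (rule grd_step)
  then show ?case using G s1 c by (cases G) auto
qed auto



lemma list_pmf_map_bind:
  "bind_pmf (list_pmf ps) (\<lambda>xs. list_pmf (map g xs)) = list_pmf (map (\<lambda>p. bind_pmf p g) ps)"
proof (induction ps)
  case Nil then show ?case by (simp add: bind_return_pmf)
next
  case (Cons p ps)
  have "bind_pmf (list_pmf (p#ps)) (\<lambda>xs. list_pmf (map g xs)) =
    bind_pmf p (\<lambda>x. bind_pmf (list_pmf ps) (\<lambda>xs. bind_pmf (g x) (\<lambda>y. bind_pmf (list_pmf (map g xs)) (\<lambda>ys. return_pmf (y#ys)))))"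
    by (simp add: bind_assoc_pmf bind_return_pmf)
  also have "\<dots> = bind_pmf p (\<lambda>x. bind_pmf (g x) (\<lambda>y. bind_pmf (list_pmf ps) (\<lambda>xs. bind_pmf (list_pmf (map g xs)) (\<lambda>ys. return_pmf (y#ys)))))"
    by (subst bind_commute_pmf) (rule refl)
  also have "\<dots> = bind_pmf p (\<lambda>x. bind_pmf (g x) (\<lambda>y. bind_pmf (list_pmf (map (\<lambda>p. bind_pmf p g) ps)) (\<lambda>ys. return_pmf (y#ys))))"
    by (simp add: bind_assoc_pmf[symmetric] Cons.IH)
  also have "\<dots> = list_pmf (map (\<lambda>p. bind_pmf p g) (p#ps))"
    by (simp add: bind_assoc_pmf)
  finally show ?case .
qed

lemma list_pmf_map2_bind:
  "length ps = length vs \<Longrightarrow>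
   bind_pmf (list_pmf ps) (\<lambda>xs. list_pmf (map2 G xs vs)) = list_pmf (map2 (\<lambda>p v. bind_pmf p (\<lambda>x. G x v)) ps vs)"
proof (induction ps arbitrary: vs)
  case Nil then show ?case by (simp add: bind_return_pmf)
next
  case (Cons p ps)
  then obtain v vs' where vs: "vs = v # vs'" and l: "length ps = length vs'" by (cases vs) auto
  have "bind_pmf (list_pmf (p#ps)) (\<lambda>xs. list_pmf (map2 G xs vs)) =
    bind_pmf p (\<lambda>x. bind_pmf (list_pmf ps) (\<lambda>xs. bind_pmf (G x v) (\<lambda>y. bind_pmf (list_pmf (map2 G xs vs')) (\<lambda>ys. return_pmf (y#ys)))))"
    by (simp add: bind_assoc_pmf bind_return_pmf vs)
  also have "\<dots> = bind_pmf p (\<lambda>x. bind_pmf (G x v) (\<lambda>y. bind_pmf (list_pmf ps) (\<lambda>xs. bind_pmf (list_pmf (map2 G xs vs')) (\<lambda>ys. return_pmf (y#ys)))))"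
    by (subst bind_commute_pmf) (rule refl)
  also have "\<dots> = bind_pmf p (\<lambda>x. bind_pmf (G x v) (\<lambda>y. bind_pmf (list_pmf (map2 (\<lambda>p v. bind_pmf p (\<lambda>x. G x v)) ps vs')) (\<lambda>ys. return_pmf (y#ys))))"
    by (simp add: bind_assoc_pmf[symmetric] Cons.IH[OF l])
  also have "\<dots> = list_pmf (map2 (\<lambda>p v. bind_pmf p (\<lambda>x. G x v)) (p#ps) vs)"
    by (simp add: bind_assoc_pmf vs)
  finally show ?case .
qed

lemma list_pmf_sel: "map_pmf (sel m) (list_pmf ps) = list_pmf (sel m ps)"
proof (induction ps arbitrary: m)
  case Nil then show ?case by simp
next
  case (Cons p ps)
  show ?case
  proof (cases m)
    case Nil
    have "map_pmf (sel m) (list_pmf (p#ps)) = map_pmf (\<lambda>_. []) (list_pmf (p#ps))"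
      using Nil by (intro map_pmf_cong) auto
    then show ?thesis using Nil by simp
  next
    case (Cons b m')
    show ?thesis
    proof (cases b)
      case True
      then show ?thesis using Cons Cons.IH[of m', symmetric]
        by (simp add: map_bind_pmf map_pmf_def[symmetric] bind_map_pmf map_pmf_comp)
    next
      case False
      have "map_pmf (sel m) (list_pmf (p#ps)) = bind_pmf p (\<lambda>x. map_pmf (sel m') (list_pmf ps))"
        using Cons False by (simp add: map_bind_pmf map_pmf_def bind_assoc_pmf bind_return_pmf)
      also have "\<dots> = map_pmf (sel m') (list_pmf ps)" by simp
      finally show ?thesis using Cons False Cons.IH by simp
    qed
  qed
qed

lemma list_pmf_snoc: "list_pmf (ps @ [return_pmf z]) = map_pmf (\<lambda>xs. xs @ [z]) (list_pmf ps)"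
proof (induction ps)
  case Nil then show ?case by (simp add: bind_return_pmf)
next
  case (Cons p ps)
  then show ?case by (simp add: map_bind_pmf map_pmf_def bind_assoc_pmf bind_return_pmf)
qed

lemma list_pmf_rep_return: "list_pmf (replicate t (return_pmf z)) = return_pmf (replicate t z)"
  by (induction t) (simp_all add: bind_return_pmf)

lemma set_list_pmf: "xs \<in> set_pmf (list_pmf ps) \<Longrightarrow> list_all2 (\<lambda>x p. x \<in> set_pmf p) xs ps"
proof (induction ps arbitrary: xs)
  case Nil then show ?case by simp
next
  case (Cons p ps) then show ?case by auto
qed



lemma sum_list_drop_nth: "sum_list (map f (drop p u)) = (\<Sum>i\<in>{p..<length u}. f (u!i))"
proof (induction u arbitrary: p)
  case Nil then show ?case by simp
next
  case (Cons x u)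
  show ?case
  proof (cases p)
    case 0
    have "(\<Sum>i\<in>{0..<length (x#u)}. f ((x#u)!i)) = f x + (\<Sum>i\<in>{Suc 0..<Suc (length u)}. f ((x#u)!i))"
      by (simp add: sum.atLeast_Suc_lessThan add.assoc)
    also have "\<dots> = f x + (\<Sum>i\<in>{0..<length u}. f (u!i))"
      by (simp only: sum.shift_bounds_Suc_ivl) simp
    finally show ?thesis using 0 Cons.IH[of 0] by simp
  next
    case (Suc q)
    have "(\<Sum>i\<in>{Suc q..<Suc (length u)}. f ((x#u)!i)) = (\<Sum>i\<in>{q..<length u}. f (u!i))"
      by (simp only: sum.shift_bounds_Suc_ivl) simp
    then show ?thesis using Suc Cons.IH[of q] by simp
  qed
qed

lemma sw_sum: "suffix_weight u p = (\<Sum>i\<in>{p..<length u}. snd (u!i))"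
  unfolding suffix_weight_def weight_def by (rule sum_list_drop_nth)

lemma sw_snoc: "p \<le> length u \<Longrightarrow> suffix_weight (u@[x]) p = suffix_weight u p + snd x"
  unfolding suffix_weight_def weight_def by simp

lemma sw_le_weight: "suffix_weight u p \<le> weight u"
proof -
  have "weight u = weight (take p u) + suffix_weight u p"
    unfolding suffix_weight_def weight_def
    by (metis append_take_drop_id map_append sum_list_append)
  then show ?thesis by simp
qed

lemma sw_0: "suffix_weight u 0 = weight u"
  unfolding suffix_weight_def by simp

lemma sw_pos: "p < length u \<Longrightarrow> \<forall>x\<in>set u. snd x > 0 \<Longrightarrow> suffix_weight u p > 0"
proof -
  assume a: "p < length u" "\<forall>x\<in>set u. snd x > 0"
  have "snd (u!p) > 0" using a by simp
  moreover have "snd (u!p) \<le> suffix_weight u p" unfolding sw_sum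
    using a(1) by (intro member_le_sum) auto
  ultimately show ?thesis by linarith
qed

lemma sw_strict: "p < q \<Longrightarrow> q < length u \<Longrightarrow> \<forall>x\<in>set u. snd x > 0 \<Longrightarrow> suffix_weight u q < suffix_weight u p"
proof -
  assume a: "p < q" "q < length u" "\<forall>x\<in>set u. snd x > 0"
  have "{p..<length u} = {p..<q} \<union> {q..<length u}" using a by auto
  then have "suffix_weight u p = (\<Sum>i\<in>{p..<q}. snd (u!i)) + suffix_weight u q"
    unfolding sw_sum by (simp add: sum.union_disjoint)
  moreover have "snd (u!p) > 0" using a by simp
  moreover have "snd (u!p) \<le> (\<Sum>i\<in>{p..<q}. snd (u!i))"
    using a(1) by (intro member_le_sum) auto
  ultimately show ?thesis by linarith
qed

lemma size_sum_mset: "finite A \<Longrightarrow> size (\<Sum>i\<in>A. f i) = (\<Sum>i\<in>A. size (f i :: 'b multiset))"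
  by (induction rule: finite_induct) auto

lemma count_M: "count (\<Sum>i\<in>{p..<length u}. replicate_mset (snd (u ! i)) i) j
   = (if p \<le> j \<and> j < length u then snd (u!j) else 0)"
  by (simp add: count_sum count_replicate_mset sum.delta')

lemma size_M: "size (\<Sum>i\<in>{p..<length u}. replicate_mset (snd (u ! i)) i) = suffix_weight u p"
  by (simp add: size_sum_mset sw_sum)

lemma pmf_ls: "suffix_weight u p > 0 \<Longrightarrow>
  pmf (letter_sampling u p) j = real (if p \<le> j \<and> j < length u then snd (u!j) else 0) / real (suffix_weight u p)"
proof -
  assume a: "suffix_weight u p > 0"
  then have ne: "(\<Sum>i\<in>{p..<length u}. replicate_mset (snd (u ! i)) i) \<noteq> {#}"
    using size_M[where u=u and p=p] by (metis less_numeral_extra(3) size_empty)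
  show ?thesis unfolding letter_sampling_def pmf_of_multiset[OF ne] count_M size_M by (rule refl)
qed

lemma set_ls: "suffix_weight u p > 0 \<Longrightarrow> set_pmf (letter_sampling u p) \<subseteq> {p..<length u}"
proof
  fix j assume a: "suffix_weight u p > 0" "j \<in> set_pmf (letter_sampling u p)"
  then have "pmf (letter_sampling u p) j \<noteq> 0" by (simp add: set_pmf_eq)
  then show "j \<in> {p..<length u}" using pmf_ls[OF a(1), of j] by (auto split: if_splits)
qed

lemma ls_last: "w > 0 \<Longrightarrow> letter_sampling (u@[(c,w)]) (length u) = return_pmf (length u)"
proof (rule pmf_eqI)
  fix j assume w: "w > 0"
  have sw: "suffix_weight (u@[(c,w)]) (length u) = w" using sw_snoc[of "length u" u "(c,w)"]
    by (simp add: suffix_weight_def weight_def)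
  show "pmf (letter_sampling (u@[(c,w)]) (length u)) j = pmf (return_pmf (length u)) j"
    using pmf_ls[of "u@[(c,w)]" "length u" j] sw w by (cases "j = length u") (auto simp: indicator_def nth_append)
qed

lemma ls_snoc:
  assumes p: "p < length u" and pos: "suffix_weight u p > 0" and w: "w > 0"
  shows "letter_sampling (u@[(c,w)]) p = bind_pmf (letter_sampling u p)
     (\<lambda>i. map_pmf (\<lambda>b. if b then length u else i) (bernoulli_pmf (real w / real (suffix_weight u p + w))))"
proof -
  define q where "q = real w / real (suffix_weight u p + w)"
  define L where "L = letter_sampling u p"
  have q01: "0 \<le> q" "q \<le> 1" unfolding q_def using w by (auto simp: divide_le_eq_1)
  have "bind_pmf L (\<lambda>i. map_pmf (\<lambda>b. if b then length u else i) (bernoulli_pmf q))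
      = bind_pmf L (\<lambda>i. bind_pmf (bernoulli_pmf q) (\<lambda>b. return_pmf (if b then length u else i)))"
    by (simp add: map_pmf_def)
  also have "\<dots> = bind_pmf (bernoulli_pmf q) (\<lambda>b. bind_pmf L (\<lambda>i. return_pmf (if b then length u else i)))"
    by (rule bind_commute_pmf)
  also have "\<dots> = bind_pmf (bernoulli_pmf q) (\<lambda>b. if b then return_pmf (length u) else L)"
    by (intro bind_pmf_cong refl) (auto simp: bind_return_pmf')
  finally have eq: "bind_pmf L (\<lambda>i. map_pmf (\<lambda>b. if b then length u else i) (bernoulli_pmf q))
      = bind_pmf (bernoulli_pmf q) (\<lambda>b. if b then return_pmf (length u) else L)" .
  have sw': "suffix_weight (u@[(c,w)]) p = suffix_weight u p + w" using sw_snoc[of p u "(c,w)"] p by simp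
  have "letter_sampling (u@[(c,w)]) p = bind_pmf (bernoulli_pmf q) (\<lambda>b. if b then return_pmf (length u) else L)"
  proof (rule pmf_eqI)
    fix j
    have "pmf (bind_pmf (bernoulli_pmf q) (\<lambda>b. if b then return_pmf (length u) else L)) j
        = pmf (return_pmf (length u)) j * q + pmf L j * (1 - q)"
      unfolding pmf_bind using q01 by simp
    also have "\<dots> = real (if p \<le> j \<and> j < length (u@[(c,w)]) then snd ((u@[(c,w)])!j) else 0) / real (suffix_weight u p + w)"
    proof -
      have h1: "1 - q = real (suffix_weight u p) / real (suffix_weight u p + w)"
        unfolding q_def using w by (simp add: field_simps)
      have h2: "a / real (suffix_weight u p) * (real (suffix_weight u p) / real (suffix_weight u p + w))
           = a / real (suffix_weight u p + w)" for a
        using pos by simp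
      show ?thesis unfolding L_def pmf_ls[OF pos] h1 h2 unfolding q_def using pos w p
        by (auto simp: indicator_def nth_append)
    qed
    also have "\<dots> = pmf (letter_sampling (u@[(c,w)]) p) j"
      using pmf_ls[of "u@[(c,w)]" p j] sw' pos by simp
    finally show "pmf (letter_sampling (u@[(c,w)]) p) j = pmf (bind_pmf (bernoulli_pmf q) (\<lambda>b. if b then return_pmf (length u) else L)) j" ..
  qed
  then show ?thesis using eq unfolding L_def q_def by simp
qed



lemma sp_len_aux:
  assumes a: "a > 1"
  shows "sp a vs \<Longrightarrow> sorted_wrt (>) vs \<Longrightarrow> \<forall>v\<in>set vs. v \<ge> 1 \<Longrightarrow> vs \<noteq> [] \<Longrightarrow>
    (\<forall>m. length vs = 2*m+1 \<longrightarrow> a^m \<le> real (hd vs)) \<and> (\<forall>m. length vs = 2*m+2 \<longrightarrow> a^m < real (hd vs))"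
proof (induction "length vs" arbitrary: vs rule: less_induct)
  case less
  show ?case
  proof (cases vs)
    case Nil then show ?thesis using less by simp
  next
    case (Cons x r1)
    show ?thesis
    proof (cases r1)
      case Nil then show ?thesis using less Cons by auto
    next
      case (Cons y r2)
      note C1 = \<open>vs = x # r1\<close>
      show ?thesis
      proof (cases r2)
        case Nil
        have "y < x" "y \<ge> 1" using less C1 Cons by auto
        then show ?thesis using C1 Cons Nil by auto
      next
        case (Cons z r)
        have vs: "vs = x#y#z#r" using C1 \<open>r1 = y # r2\<close> Cons by simp
        have spz: "sp a (z#r)" using less(2) vs sp_tl by (metis)
        have az: "a * real z < real x" using less(2) vs by simp
        have IH: "(\<forall>m. length (z#r) = 2*m+1 \<longrightarrow> a^m \<le> real z) \<and> (\<forall>m. length (z#r) = 2*m+2 \<longrightarrow> a^m < real z)"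
          using less(1)[of "z#r"] spz less(3,4) vs by auto
        have a0: "a > 0" using a by simp
        show ?thesis
        proof (intro conjI allI impI)
          fix m assume "length vs = 2*m+1"
          then obtain m' where m: "m = Suc m'" "length (z#r) = 2*m'+1" using vs by (cases m) auto
          then have "a^m' \<le> real z" using IH by blast
          then have "a^m \<le> a * real z" using m a0 by simp
          then show "a^m \<le> real (hd vs)" using az vs by simp
        next
          fix m assume "length vs = 2*m+2"
          then obtain m' where m: "m = Suc m'" "length (z#r) = 2*m'+2" using vs by (cases m) auto
          then have "a^m' < real z" using IH by blast
          then have "a^m < a * real z" using m a0 by simp
          then show "a^m < real (hd vs)" using az vs by simp
        qed
      qed
    qed
  qed
qed

lemma sp_len:
  assumes a: "a > 1" and "sp a vs" "sorted_wrt (>) vs" "\<forall>v\<in>set vs. v \<ge> 1" "vs \<noteq> []"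
  shows "real (length vs) \<le> 1 + 2 * real_of_int \<lceil>ln (real (hd vs)) / ln a\<rceil>"
proof -
  note X = sp_len_aux[OF assms]
  define L where "L = ln (real (hd vs)) / ln a"
  have la: "ln a > 0" using a by simp
  have h1: "real (hd vs) > 0" using assms(4,5) by (cases vs) auto
  have key: "real m \<le> L" if "a^m \<le> real (hd vs)" for m
  proof -
    have "ln (a^m) \<le> ln (real (hd vs))" using that a h1 by simp
    then have "real m * ln a \<le> ln (real (hd vs))" using a by (simp add: ln_realpow)
    then show ?thesis unfolding L_def using la by (simp add: le_divide_eq)
  qed
  have key2: "real m < L" if "a^m < real (hd vs)" for m
  proof -
    have "ln (a^m) < ln (real (hd vs))" using that a h1 by simp
    then have "real m * ln a < ln (real (hd vs))" using a by (simp add: ln_realpow)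
    then show ?thesis unfolding L_def using la by (simp add: less_divide_eq)
  qed
  show ?thesis
  proof (cases "even (length vs)")
    case True
    then obtain k where k: "length vs = 2*k" by (metis evenE)
    have "length vs \<noteq> 0" using assms(5) by simp
    then have "k \<noteq> 0" using k by auto
    then obtain m where m: "length vs = 2*m+2" using k by (cases k) auto
    then have "real m < L" using X key2 by blast
    then have "int m < \<lceil>L\<rceil>" by (simp add: less_ceiling_iff)
    then have "int m + 1 \<le> \<lceil>L\<rceil>" by linarith
    then have "real m + 1 \<le> real_of_int \<lceil>L\<rceil>" by linarith
    then show ?thesis using m unfolding L_def by simp
  next
    case False
    then obtain m where m: "length vs = 2*m+1" by (metis oddE)
    then have "real m \<le> L" using X key by blast
    moreover have "L \<le> real_of_int \<lceil>L\<rceil>" by (rule le_of_int_ceiling)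
    ultimately have "real m \<le> real_of_int \<lceil>L\<rceil>" by linarith
    then show ?thesis using m unfolding L_def by simp
  qed
qed



primrec Kn :: "real \<Rightarrow> ('a \<times> nat) list \<Rightarrow> nat \<Rightarrow> nat list" where
  "Kn a u 0 = []"
| "Kn a u (Suc i) = sel (gmk a (suffix_weight (take (Suc i) u)) (Kn a u i @ [i])) (Kn a u i @ [i])"

definition K :: "real \<Rightarrow> ('a \<times> nat) list \<Rightarrow> nat list" where
  "K a u = Kn a u (length u)"

lemma Kn_snoc: "i \<le> length u \<Longrightarrow> Kn a (u@[x]) i = Kn a u i"
  by (induction i) auto

lemma K_Nil: "K a [] = []" by (simp add: K_def)

lemma K_snoc: "K a (u@[x]) = sel (gmk a (suffix_weight (u@[x])) (K a u @ [length u])) (K a u @ [length u])"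
  unfolding K_def using Kn_snoc[of "length u" u a x] by simp

lemma K_snoc_grd: "K a (u@[x]) = grd a (suffix_weight (u@[x])) (K a u @ [length u])"
  unfolding K_snoc sel_gmk ..

lemma gd_shift:
  "a \<ge> 1 \<Longrightarrow> gd a S xs \<Longrightarrow> \<forall>p\<in>set xs. S' p = S p + w \<Longrightarrow> gd a S' xs"
proof (induction a S xs rule: gd.induct)
  case (1 a S p q r)
  have "real (S p) \<le> a * real (S q) \<Longrightarrow> real (S' p) \<le> a * real (S' q)"
  proof -
    assume h: "real (S p) \<le> a * real (S q)"
    have "real (S' p) = real (S p) + real w" "real (S' q) = real (S q) + real w" using 1(4) by auto
    moreover have "1 * real w \<le> a * real w" using 1(2) by (intro mult_right_mono) auto
    ultimately show ?thesis using h by (simp add: distrib_left)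
  qed
  then show ?case using 1 by auto
qed auto

lemma gd_snoc: "gd a S xs \<Longrightarrow> (xs \<noteq> [] \<Longrightarrow> y = Suc (last xs)) \<Longrightarrow> gd a S (xs @ [y])"
  by (induction a S xs rule: gd.induct) auto

lemma gd_nth: "gd a S xs \<Longrightarrow> Suc l < length xs \<Longrightarrow> xs!Suc l = Suc (xs!l) \<or> real (S (xs!l)) \<le> a * real (S (xs!Suc l))"
proof (induction a S xs arbitrary: l rule: gd.induct)
  case (1 a S p q r)
  then show ?case by (cases l) auto
qed auto

definition Inv :: "real \<Rightarrow> ('a \<times> nat) list \<Rightarrow> bool" where
  "Inv a u \<longleftrightarrow> K a u \<noteq> [] \<and> hd (K a u) = 0 \<and> last (K a u) = length u - 1 \<and> sorted_wrt (<) (K a u) \<and>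
     set (K a u) \<subseteq> {..<length u} \<and> gd a (suffix_weight u) (K a u) \<and> sp a (map (suffix_weight u) (K a u))"

lemma Inv_snoc:
  assumes a: "a > 1" and pos: "\<forall>x\<in>set (u@[x]). snd x > 0" and I: "u \<noteq> [] \<Longrightarrow> Inv a u"
  shows "Inv a (u@[x])"
proof -
  define n where "n = length u"
  define S where "S = suffix_weight u"
  define S' where "S' = suffix_weight (u@[x])"
  define c where "c = K a u @ [n]"
  have K': "K a (u@[x]) = grd a S' c" unfolding K_snoc_grd S'_def c_def n_def ..
  have Ku: "u = [] \<Longrightarrow> K a u = []" by (simp add: K_Nil)
  have setc: "set c \<subseteq> {..<Suc n}"
    using I Ku unfolding Inv_def c_def n_def by (cases "u = []") auto
  have sc: "sorted_wrt (<) c"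
  proof (cases "u = []")
    case True then show ?thesis unfolding c_def using Ku by simp
  next
    case False
    then have "sorted_wrt (<) (K a u)" "set (K a u) \<subseteq> {..<n}" using I unfolding Inv_def n_def by auto
    then show ?thesis unfolding c_def by (auto simp: sorted_wrt_append)
  qed
  have hdc: "hd c = 0"
    using I Ku unfolding Inv_def c_def n_def by (cases "u = []") auto
  have gc: "gd a S' c"
  proof (cases "u = []")
    case True then show ?thesis unfolding c_def using Ku by simp
  next
    case False
    then have i: "gd a S (K a u)" "set (K a u) \<subseteq> {..<n}" "K a u \<noteq> []" "last (K a u) = n - 1"
      using I unfolding Inv_def n_def S_def by auto
    have "\<forall>p\<in>set (K a u). S' p = S p + snd x"
      using i(2) unfolding S_def S'_def n_def by (auto intro!: sw_snoc dest!: subsetD)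
    then have "gd a S' (K a u)" using gd_shift[of a S "K a u" S' "snd x"] a i(1) by fastforce
    moreover have "n = Suc (last (K a u))" using i(4) False unfolding n_def by simp
    ultimately show ?thesis unfolding c_def using gd_snoc by blast
  qed
  have dec: "sorted_wrt (\<lambda>p q. S' q < S' p) c"
  proof (rule sorted_wrt_mono_rel[OF _ sc])
    fix p q assume "p \<in> set c" "q \<in> set c" "p < q"
    then show "S' q < S' p" unfolding S'_def using setc pos n_def by (intro sw_strict) auto
  qed
  have ne: "c \<noteq> []" unfolding c_def by simp
  show ?thesis unfolding Inv_def K'
  proof (intro conjI)
    show "grd a S' c \<noteq> []" using ne by simp
    show "hd (grd a S' c) = 0" using grd_Cons_hd[of a S' "hd c" "tl c"] ne hdc by (cases c) auto
    show "last (grd a S' c) = length (u @ [x]) - 1" using grd_last[OF ne] unfolding c_def n_def by simp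
    show "sorted_wrt (<) (grd a S' c)" using grd_sorted[OF sc] .
    show "set (grd a S' c) \<subseteq> {..<length (u @ [x])}" using grd_set[of a S' c] setc unfolding n_def by auto
    show "gd a (suffix_weight (u @ [x])) (grd a S' c)" using grd_gd[OF gc] unfolding S'_def .
    show "sp a (map (suffix_weight (u @ [x])) (grd a S' c))" using grd_sp[of a S' c] dec a unfolding S'_def by simp
  qed
qed

lemma Inv_all: "a > 1 \<Longrightarrow> \<forall>x\<in>set u. snd x > 0 \<Longrightarrow> u \<noteq> [] \<Longrightarrow> Inv a u"
proof (induction u rule: rev_induct)
  case Nil then show ?case by simp
next
  case (snoc x u)
  then show ?case using Inv_snoc[of a u x] by auto
qed

lemma K_set: "set (K a u) \<subseteq> {..<length u}"
proof (induction u rule: rev_induct)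
  case Nil then show ?case by (simp add: K_Nil)
next
  case (snoc x u)
  then show ?case unfolding K_snoc using sel_subset by fastforce
qed

lemma K_decomp:
  assumes a: "a > 1" and pos: "\<forall>x\<in>set u. snd x > 0" and ne: "u \<noteq> []"
  shows "alpha_suffix_decomp a u (K a u) \<and>
    real (length (K a u)) \<le> 1 + 2 * real_of_int \<lceil>ln (real (weight u)) / ln a\<rceil>"
proof -
  have I: "Inv a u" using Inv_all assms by blast
  let ?K = "K a u" and ?S = "suffix_weight u"
  have cond: "\<forall>l. Suc l < length ?K \<longrightarrow> real (?S (?K ! l)) > a * real (?S (?K ! Suc l)) \<longrightarrow> ?K ! Suc l = ?K ! l + 1"
    using gd_nth[of a ?S ?K] I unfolding Inv_def by force
  have d1: "alpha_suffix_decomp a u ?K" unfolding alpha_suffix_decomp_def using I cond unfolding Inv_def by auto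
  define vs where "vs = map ?S ?K"
  have sK: "sorted_wrt (<) ?K" "set ?K \<subseteq> {..<length u}" using I unfolding Inv_def by auto
  have "sorted_wrt (>) vs" unfolding vs_def sorted_wrt_map
  proof (rule sorted_wrt_mono_rel[OF _ sK(1)])
    fix p q assume "p \<in> set ?K" "q \<in> set ?K" "p < q"
    then show "?S q < ?S p" using sK(2) pos by (intro sw_strict) auto
  qed
  moreover have "\<forall>v\<in>set vs. v \<ge> 1" unfolding vs_def using sK(2) pos sw_pos
    by (auto simp: Suc_le_eq)
  moreover have "sp a vs" using I unfolding Inv_def vs_def by simp
  moreover have "vs \<noteq> []" "hd vs = weight u" using I unfolding Inv_def vs_def by (auto simp: hd_map sw_0)
  ultimately have "real (length vs) \<le> 1 + 2 * real_of_int \<lceil>ln (real (hd vs)) / ln a\<rceil>"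
    using sp_len[OF a] by blast
  then show ?thesis using d1 \<open>hd vs = weight u\<close> unfolding vs_def by simp
qed



definition enc :: "nat \<Rightarrow> nat list \<Rightarrow> nat list \<Rightarrow> nat list list \<Rightarrow> nat list" where
  "enc n ps sws ss = [n, length ps] @ ps @ sws @ concat ss"

fun chunks :: "nat \<Rightarrow> nat \<Rightarrow> nat list \<Rightarrow> nat list list" where
  "chunks t 0 xs = []"
| "chunks t (Suc k) xs = take t xs # chunks t k (drop t xs)"

definition dec :: "nat \<Rightarrow> nat list \<Rightarrow> nat \<times> nat list \<times> nat list \<times> nat list list" where
  "dec t s = (s!0, take (s!1) (drop 2 s), take (s!1) (drop (2 + s!1) s), chunks t (s!1) (drop (2 + 2 * s!1) s))"

lemma chunks_concat: "\<forall>l\<in>set ss. length l = t \<Longrightarrow> chunks t (length ss) (concat ss) = ss"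
  by (induction ss) auto

lemma dec_enc: "length sws = length ps \<Longrightarrow> length ss = length ps \<Longrightarrow> \<forall>l\<in>set ss. length l = t \<Longrightarrow>
  dec t (enc n ps sws ss) = (n, ps, sws, ss)"
  unfolding dec_def enc_def using chunks_concat[of ss t] by (simp add: mult_2)

definition coin :: "nat \<Rightarrow> nat \<Rightarrow> nat \<Rightarrow> nat \<Rightarrow> nat pmf" where
  "coin n w v i = map_pmf (\<lambda>b. if b then n else i) (bernoulli_pmf (real w / real (v + w)))"

definition upd :: "nat \<Rightarrow> nat \<Rightarrow> nat list \<Rightarrow> nat \<Rightarrow> nat list pmf" where
  "upd n w sl v = list_pmf (map (coin n w v) sl)"

definition stepf :: "real \<Rightarrow> nat \<Rightarrow> nat list \<Rightarrow> 'a \<times> nat \<Rightarrow> nat list pmf" where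
  "stepf a t s x = (case dec t s of (n, ps, sws, ss) \<Rightarrow>
     let sws1 = map (\<lambda>v. v + snd x) sws @ [snd x]; ps1 = ps @ [n]; m = gmk a id sws1 in
     map_pmf (\<lambda>ss'. enc (Suc n) (sel m ps1) (sel m sws1) (sel m (ss' @ [replicate t n])))
       (list_pmf (map2 (upd n (snd x)) ss sws)))"

definition outf :: "nat \<Rightarrow> nat list \<Rightarrow> nat list \<times> nat list list" where
  "outf t s = (case dec t s of (n, ps, sws, ss) \<Rightarrow> (ps, ss))"

lemma map2_map_same: "map2 f (map g xs) (map h xs) = map (\<lambda>x. f (g x) (h x)) xs"
  by (induction xs) auto

lemma supp_samples:
  assumes "ss \<in> set_pmf (suffix_samples t u ps)" "\<forall>p\<in>set ps. suffix_weight u p > 0"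
  shows "length ss = length ps \<and> (\<forall>l\<in>set ss. length l = t) \<and> (\<forall>l\<in>set ss. \<forall>i\<in>set l. i < length u)"
proof -
  have la: "list_all2 (\<lambda>x p. x \<in> set_pmf p) ss (map (\<lambda>p. list_pmf (replicate t (letter_sampling u p))) ps)"
    using assms(1) unfolding suffix_samples_def by (rule set_list_pmf)
  then have l: "length ss = length ps" by (simp add: list_all2_lengthD)
  have "length l = t \<and> (\<forall>i\<in>set l. i < length u)" if "l \<in> set ss" for l
  proof -
    from that obtain j where j: "j < length ss" "l = ss!j" by (auto simp: in_set_conv_nth)
    have "l \<in> set_pmf (list_pmf (replicate t (letter_sampling u (ps!j))))"
      using la j l by (auto simp: list_all2_conv_all_nth)
    then have la2: "list_all2 (\<lambda>x p. x \<in> set_pmf p) l (replicate t (letter_sampling u (ps!j)))"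
      by (rule set_list_pmf)
    have pos: "suffix_weight u (ps!j) > 0" using assms(2) j l by simp
    have "\<forall>i\<in>set l. i \<in> set_pmf (letter_sampling u (ps!j))"
      using la2 by (auto simp: list_all2_conv_all_nth in_set_conv_nth)
    then have "\<forall>i\<in>set l. i < length u" using set_ls[OF pos] by auto
    then show ?thesis using la2 by (simp add: list_all2_lengthD)
  qed
  then show ?thesis using l by blast
qed

lemma run_snoc: "stream_run init step (u@[x]) = bind_pmf (stream_run init step u) (\<lambda>s. step s x)"
  unfolding stream_run_def by simp

lemma run_inv:
  assumes a: "a > 1"
  shows "\<forall>x\<in>set u. snd x > 0 \<Longrightarrow> stream_run [0,0] (stepf a t) u =
    map_pmf (enc (length u) (K a u) (map (suffix_weight u) (K a u))) (suffix_samples t u (K a u))"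
proof (induction u rule: rev_induct)
  case Nil
  show ?case by (simp add: stream_run_def K_Nil suffix_samples_def enc_def)
next
  case (snoc x u)
  obtain c w where x: "x = (c, w)" by (cases x)
  have w: "w > 0" using snoc(2) x by simp
  have posu: "\<forall>x\<in>set u. snd x > 0" using snoc(2) by simp
  define n where "n = length u"
  define Ku where "Ku = K a u"
  define S where "S = suffix_weight u"
  define S' where "S' = suffix_weight (u@[x])"
  define c0 where "c0 = Ku @ [n]"
  define m where "m = gmk a id (map S' c0)"
  define Q where "Q = (\<lambda>p. list_pmf (replicate t (letter_sampling (u@[x]) p)))"
  define SS where "SS = suffix_samples t u Ku"
  have setK: "set Ku \<subseteq> {..<n}" unfolding Ku_def n_def by (rule K_set)
  have Spos: "\<forall>p\<in>set Ku. S p > 0"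
  proof
    fix p assume "p \<in> set Ku"
    then have "p < length u" using setK n_def by auto
    then show "S p > 0" unfolding S_def using posu by (rule sw_pos)
  qed
  have sws1: "map (\<lambda>v. v + snd x) (map S Ku) @ [snd x] = map S' c0"
  proof -
    have "map (\<lambda>v. v + snd x) (map S Ku) = map S' Ku"
      using setK unfolding S_def S'_def n_def by (auto intro!: sw_snoc[symmetric])
    moreover have "S' n = snd x" unfolding S'_def n_def by (simp add: suffix_weight_def weight_def)
    ultimately show ?thesis unfolding c0_def by simp
  qed
  have m': "m = gmk a S' c0" unfolding m_def gmk_map by simp
  have K': "K a (u@[x]) = sel m c0" unfolding m' K_snoc c0_def Ku_def S'_def n_def ..
  define F where "F = (\<lambda>ss'. enc (Suc n) (sel m (Ku @ [n])) (sel m (map S' c0)) (sel m (ss' @ [replicate t n])))"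
  have step_eq: "stepf a t (enc n Ku (map S Ku) ss) x = map_pmf F (list_pmf (map2 (upd n w) ss (map S Ku)))"
    if "ss \<in> set_pmf SS" for ss
  proof -
    have "length ss = length Ku \<and> (\<forall>l\<in>set ss. length l = t)"
      using supp_samples[OF that[unfolded SS_def]] Spos unfolding S_def by blast
    then have "dec t (enc n Ku (map S Ku) ss) = (n, Ku, map S Ku, ss)" by (intro dec_enc) auto
    then show ?thesis unfolding stepf_def F_def using sws1 x by (simp add: m_def Let_def)
  qed
  have "stream_run [0,0] (stepf a t) (u@[x]) = bind_pmf (map_pmf (enc n Ku (map S Ku)) SS) (\<lambda>s. stepf a t s x)"
    unfolding run_snoc snoc(1)[OF posu] n_def Ku_def S_def SS_def ..
  also have "\<dots> = bind_pmf SS (\<lambda>ss. map_pmf F (list_pmf (map2 (upd n w) ss (map S Ku))))"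
    unfolding bind_map_pmf by (intro bind_pmf_cong refl) (use step_eq in simp)
  also have "\<dots> = map_pmf F (bind_pmf SS (\<lambda>ss. list_pmf (map2 (upd n w) ss (map S Ku))))"
    by (simp add: map_bind_pmf)
  also have "bind_pmf SS (\<lambda>ss. list_pmf (map2 (upd n w) ss (map S Ku)))
     = list_pmf (map2 (\<lambda>P v. bind_pmf P (\<lambda>sl. upd n w sl v)) (map (\<lambda>p. list_pmf (replicate t (letter_sampling u p))) Ku) (map S Ku))"
    unfolding SS_def suffix_samples_def by (rule list_pmf_map2_bind) simp
  also have "\<dots> = list_pmf (map Q Ku)"
  proof -
    have "bind_pmf (list_pmf (replicate t (letter_sampling u p))) (\<lambda>sl. upd n w sl (S p)) = Q p"
      if "p \<in> set Ku" for p
    proof -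
      have p: "p < length u" using that setK n_def by auto
      have "bind_pmf (list_pmf (replicate t (letter_sampling u p))) (\<lambda>sl. upd n w sl (S p))
          = list_pmf (map (\<lambda>P. bind_pmf P (coin n w (S p))) (replicate t (letter_sampling u p)))"
        unfolding upd_def by (rule list_pmf_map_bind)
      also have "\<dots> = Q p" unfolding Q_def x coin_def S_def n_def
        using ls_snoc[OF p _ w, of c] Spos that unfolding S_def by simp
      finally show ?thesis .
    qed
    then show ?thesis unfolding map2_map_same by (simp cong: map_cong)
  qed
  finally have eq1: "stream_run [0,0] (stepf a t) (u@[x]) = map_pmf F (list_pmf (map Q Ku))" .
  have Qn: "Q n = return_pmf (replicate t n)"
    unfolding Q_def x n_def ls_last[OF w] list_pmf_rep_return ..
  have "map_pmf F (list_pmf (map Q Ku))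
      = map_pmf (\<lambda>z. enc (Suc n) (sel m c0) (sel m (map S' c0)) (sel m z)) (list_pmf (map Q Ku @ [Q n]))"
    unfolding Qn list_pmf_snoc map_pmf_comp F_def c0_def by simp
  also have "\<dots> = map_pmf (enc (Suc n) (sel m c0) (sel m (map S' c0))) (map_pmf (sel m) (list_pmf (map Q c0)))"
    unfolding map_pmf_comp c0_def by simp
  also have "\<dots> = map_pmf (enc (Suc n) (sel m c0) (map S' (sel m c0))) (list_pmf (map Q (sel m c0)))"
    unfolding list_pmf_sel sel_map ..
  also have "\<dots> = map_pmf (enc (length (u@[x])) (K a (u@[x])) (map (suffix_weight (u@[x])) (K a (u@[x]))))
      (suffix_samples t (u@[x]) (K a (u@[x])))"
    unfolding K' suffix_samples_def Q_def S'_def n_def by simp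
  finally show ?case using eq1 by simp
qed



lemma state_bound:
  assumes a: "a > 1" and pos: "\<forall>x\<in>set u. snd x > 0"
    and s: "s \<in> set_pmf (stream_run [0,0] (stepf a t) u)"
  shows "real (length s) \<le> real (8 + 3*t) * (1 + ln (real (weight u)) / ln a) \<and>
         (\<forall>x\<in>set s. x \<le> max (length u) (weight u))"
proof -
  let ?K = "K a u" and ?S = "suffix_weight u"
  obtain ss where ss: "ss \<in> set_pmf (suffix_samples t u ?K)" and s_eq: "s = enc (length u) ?K (map ?S ?K) ss"
    using s unfolding run_inv[OF a pos] by auto
  have setK: "set ?K \<subseteq> {..<length u}" by (rule K_set)
  have Spos: "\<forall>p\<in>set ?K. ?S p > 0"
  proof
    fix p assume "p \<in> set ?K"
    then have "p < length u" using setK by auto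
    then show "?S p > 0" using pos by (rule sw_pos)
  qed
  have sup: "length ss = length ?K \<and> (\<forall>l\<in>set ss. length l = t) \<and> (\<forall>l\<in>set ss. \<forall>i\<in>set l. i < length u)"
    using supp_samples[OF ss Spos] .
  have lc: "length (concat ss) = length ?K * t"
  proof -
    have "length (concat ss) = sum_list (map length ss)" by (simp add: length_concat)
    also have "map length ss = replicate (length ss) t"
    proof -
      have "\<forall>l\<in>set xs. length l = t \<Longrightarrow> map length xs = replicate (length xs) t" for xs :: "nat list list"
        by (induction xs) auto
      then show ?thesis using sup by blast
    qed
    finally show ?thesis using sup by (simp add: sum_list_replicate)
  qed
  have len: "length s = 2 + length ?K * (2 + t)" unfolding s_eq enc_def using lc by (simp add: algebra_simps)
  show ?thesis
  proof (cases "u = []")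
    case True
    then have "?K = []" by (simp add: K_Nil)
    then have "s = [0,0]" using s_eq sup True by (simp add: enc_def)
    then show ?thesis using True by (simp add: weight_def)
  next
    case False
    have kb: "real (length ?K) \<le> 1 + 2 * real_of_int \<lceil>ln (real (weight u)) / ln a\<rceil>"
      using K_decomp[OF a pos False] by blast
    define L where "L = ln (real (weight u)) / ln a"
    have "suffix_weight u 0 > 0" using False pos by (intro sw_pos) auto
    then have W1: "weight u \<ge> 1" unfolding sw_0 by simp
    have L0: "L \<ge> 0" unfolding L_def using W1 a by simp
    have "real_of_int \<lceil>L\<rceil> \<le> L + 1" using ceiling_correct[of L] by linarith
    then have kb2: "real (length ?K) \<le> 3 + 2 * L" using kb unfolding L_def by linarith
    have "real (length ?K) * (2 + real t) \<le> (3 + 2 * L) * (2 + real t)"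
      using kb2 by (intro mult_right_mono) auto
    moreover have "L * real t \<ge> 0" using L0 by simp
    moreover have "(3 + 2 * L) * (2 + real t) = 6 + 3 * real t + 4 * L + 2 * (L * real t)"
      by (simp add: algebra_simps)
    moreover have "real (8 + 3*t) * (1 + L) = 8 + 3 * real t + 8 * L + 3 * (L * real t)"
      by (simp add: algebra_simps)
    moreover have "real (length s) = 2 + real (length ?K) * (2 + real t)" unfolding len by (simp add: algebra_simps)
    ultimately have "real (length s) \<le> real (8 + 3*t) * (1 + L)" using L0 by linarith
    moreover have "\<forall>x\<in>set s. x \<le> max (length u) (weight u)"
    proof -
      have dK: "distinct ?K" using Inv_all[OF a pos False] unfolding Inv_def by (simp add: strict_sorted_iff)
      have "length ?K = card (set ?K)" using dK by (simp add: distinct_card)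
      also have "\<dots> \<le> card {..<length u}" using setK by (intro card_mono) auto
      finally have kn: "length ?K \<le> length u" by simp
      have "\<forall>x\<in>set (map ?S ?K). x \<le> weight u" using sw_le_weight by auto
      moreover have "\<forall>x\<in>set (concat ss). x < length u" using sup by auto
      ultimately show ?thesis unfolding s_eq enc_def using kn setK by force
    qed
    ultimately show ?thesis unfolding L_def by blast
  qed
qed

lemma out_run:
  assumes a: "a > 1" and pos: "\<forall>x\<in>set u. snd x > 0"
  shows "map_pmf (outf t) (stream_run [0,0] (stepf a t) u) = map_pmf (Pair (K a u)) (suffix_samples t u (K a u))"
proof -
  let ?K = "K a u" and ?S = "suffix_weight u"
  have setK: "set ?K \<subseteq> {..<length u}" by (rule K_set)
  have Spos: "\<forall>p\<in>set ?K. ?S p > 0"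
  proof
    fix p assume "p \<in> set ?K"
    then have "p < length u" using setK by auto
    then show "?S p > 0" using pos by (rule sw_pos)
  qed
  show ?thesis unfolding run_inv[OF a pos] map_pmf_comp
  proof (rule map_pmf_cong[OF refl])
    fix ss assume "ss \<in> set_pmf (suffix_samples t u ?K)"
    then have "length ss = length ?K \<and> (\<forall>l\<in>set ss. length l = t)" using supp_samples Spos by blast
    then have "dec t (enc (length u) ?K (map ?S ?K) ss) = (length u, ?K, map ?S ?K, ss)" by (intro dec_enc) auto
    then show "outf t (enc (length u) ?K (map ?S ?K) ss) = (?K, ss)" unfolding outf_def by simp
  qed
qed

theorem mainTheorem10:
  fixes \<alpha> :: real and t :: nat
  assumes "\<alpha> > 1"
  shows "\<exists>(init :: nat list) (step :: nat list \<Rightarrow> 'a \<times> nat \<Rightarrow> nat list pmf)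
            (out :: nat list \<Rightarrow> nat list \<times> nat list list) (C :: nat).
    \<forall>u :: ('a \<times> nat) list. (\<forall>x\<in>set u. snd x > 0) \<longrightarrow>
      (\<forall>s\<in>set_pmf (stream_run init step u).
          real (length s) \<le> real C * (1 + ln (real (weight u)) / ln \<alpha>) \<and>
          (\<forall>x\<in>set s. x \<le> max (length u) (weight u))) \<and>
      (u \<noteq> [] \<longrightarrow>
        (\<exists>D :: nat list pmf.
           (\<forall>ps\<in>set_pmf D. alpha_suffix_decomp \<alpha> u ps \<and>
              real (length ps) \<le> 1 + 2 * real_of_int \<lceil>ln (real (weight u)) / ln \<alpha>\<rceil>) \<and>
           map_pmf out (stream_run init step u) =
             bind_pmf D (\<lambda>ps. map_pmf (Pair ps) (suffix_samples t u ps))))"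
proof (rule exI[of _ "[0,0]"], rule exI[of _ "stepf \<alpha> t"], rule exI[of _ "outf t"], rule exI[of _ "8 + 3*t"],
       intro allI impI conjI)
  fix u :: "('a \<times> nat) list"
  assume pos: "\<forall>x\<in>set u. snd x > 0"
  show "\<forall>s\<in>set_pmf (stream_run [0,0] (stepf \<alpha> t) u).
          real (length s) \<le> real (8 + 3*t) * (1 + ln (real (weight u)) / ln \<alpha>) \<and>
          (\<forall>x\<in>set s. x \<le> max (length u) (weight u))"
    using state_bound[OF assms pos] by blast
next
  fix u :: "('a \<times> nat) list"
  assume pos: "\<forall>x\<in>set u. snd x > 0" and ne: "u \<noteq> []"
  show "\<exists>D :: nat list pmf.
           (\<forall>ps\<in>set_pmf D. alpha_suffix_decomp \<alpha> u ps \<and>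
              real (length ps) \<le> 1 + 2 * real_of_int \<lceil>ln (real (weight u)) / ln \<alpha>\<rceil>) \<and>
           map_pmf (outf t) (stream_run [0,0] (stepf \<alpha> t) u) =
             bind_pmf D (\<lambda>ps. map_pmf (Pair ps) (suffix_samples t u ps))"
    by (rule exI[of _ "return_pmf (K \<alpha> u)"])
       (simp add: K_decomp[OF assms pos ne] out_run[OF assms pos] bind_return_pmf)
qed


end
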